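(* Let $d=1$. There is a constant $c_1$ depending only on the dimension such that for all $N\ge1$, $$E_Q\left((K(N)-N)^2\right)\le N^2\sum_{n=1}^N\left(c_1c^2_{N,1}N^{1/2}\right)^n.$$
   Context: $P^N_0$ is the uniform probability measure on nearest-neighbour walks $\omega:\{0,\dots,N\}\to\mathbb{Z}$ with $\omega(0)=0$, $|\omega(n)-\omega(n-1)|=1$. The environment $h=\{h(n,x):n\in\mathbb{N},x\in\mathbb{Z}\}$ is i.i.d. with $h(n,x)=\pm1$ each with probability $1/2$ on $(H,\mathcal{G},Q)$, independent of the walk; $E_Q$ is expectation under $Q$. $(c_{N,1})$ is a sequence of positive numbers with $\lim_{N\to\infty}c_{N,1}^2N^{1/2}=0$. $K(N)=\int\prod_{n=1}^N[1+c_{N,1}h(n,\omega(n))]\,\omega(N)^2\,dP^N_0(\omega)$. *)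

theory Defs
  imports "HOL-Probability.Probability"
begin

text \<open>Nearest-neighbour walks on Z of length N started at 0, as functions
  on nat that are meaningful on {0..N} and set to 0 beyond N.\<close>
definition walks :: "nat \<Rightarrow> (nat \<Rightarrow> int) set" where
  "walks N = {w. w 0 = 0 \<and> (\<forall>n\<in>{1..N}. \<bar>w n - w (n - 1)\<bar> = 1) \<and> (\<forall>n>N. w n = 0)}"

definition PN :: "nat \<Rightarrow> (nat \<Rightarrow> int) pmf" where
  "PN N = pmf_of_set (walks N)"

definition Qenv :: "(nat \<times> int \<Rightarrow> real) measure" where
  "Qenv = PiM UNIV (\<lambda>_. measure_pmf (pmf_of_set {-1, 1::real}))"

text \<open>K(N) for the environment h and the sequence c (c N = c_{N,1}).\<close>
definition K :: "(nat \<Rightarrow> real) \<Rightarrow> nat \<Rightarrow> (nat \<times> int \<Rightarrow> real) \<Rightarrow> real" where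
  "K c N h = (\<integral>w. (\<Prod>n\<in>{1..N}. 1 + c N * h (n, w n)) * (real_of_int (w N))^2 \<partial>(measure_pmf (PN N)))"

end

theory Submission
  imports Defs
begin


lemma walks_Suc:
  "walks (Suc N) = (\<lambda>(w,s). w(Suc N := w N + s)) ` (walks N \<times> {-1,1})"
proof
  show "walks (Suc N) \<subseteq> (\<lambda>(w,s). w(Suc N := w N + s)) ` (walks N \<times> {-1,1})"
  proof
    fix v assume v: "v \<in> walks (Suc N)"
    let ?w = "v(Suc N := 0)" and ?s = "v (Suc N) - v N"
    have w: "?w \<in> walks N" using v unfolding walks_def by auto
    have a: "\<bar>v (Suc N) - v N\<bar> = 1" using v unfolding walks_def by (auto dest: bspec[of _ _ "Suc N"])
    have s: "?s \<in> {-1,1}" using a by (cases "?s \<ge> 0") auto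
    have e: "v = (\<lambda>(w,s). w(Suc N := w N + s)) (?w, ?s)" by auto
    show "v \<in> (\<lambda>(w,s). w(Suc N := w N + s)) ` (walks N \<times> {-1,1})"
      by (rule image_eqI[where x="(?w, ?s)" and f="\<lambda>(w,s). w(Suc N := w N + s)", OF e]) (use w s in blast)
  qed
next
  show "(\<lambda>(w,s). w(Suc N := w N + s)) ` (walks N \<times> {-1,1}) \<subseteq> walks (Suc N)"
  proof clarify
    fix w and s :: int assume w: "w \<in> walks N" and s: "s \<in> {-1,1}"
    show "w(Suc N := w N + s) \<in> walks (Suc N)" using w s unfolding walks_def
      by (auto simp: le_Suc_eq)
  qed
qed

lemma walks_inj: "inj_on (\<lambda>(w,s). w(Suc N := w N + s)) (walks N \<times> {-1,1})"
proof (rule inj_onI, clarify)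
  fix w s w' s' assume a: "w \<in> walks N" "(s::int) \<in> {-1,1}" "w' \<in> walks N" "s' \<in> {-1,1}"
    and e: "w(Suc N := w N + s) = w'(Suc N := w' N + s')"
  have "w = w'"
  proof
    fix n show "w n = w' n"
    proof (cases "n = Suc N")
      case True then show ?thesis using a unfolding walks_def by auto
    next
      case False then show ?thesis using fun_cong[OF e, of n] by auto
    qed
  qed
  moreover have "s = s'" using fun_cong[OF e, of "Suc N"] \<open>w = w'\<close> by simp
  ultimately show "w = w' \<and> s = s'" by simp
qed

lemma walks_0: "walks 0 = {\<lambda>_. 0}"
  unfolding walks_def by (auto intro!: ext) (metis gr0I)

lemma finite_walks: "finite (walks N)"
  by (induction N) (auto simp: walks_0 walks_Suc)

lemma sum_walks_Suc:
  "(\<Sum>w\<in>walks (Suc N). F w) = (\<Sum>w\<in>walks N. F (w(Suc N := w N + 1)) + F (w(Suc N := w N - 1)))"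
proof -
  have "(\<Sum>w\<in>walks (Suc N). F w) = (\<Sum>p\<in>walks N \<times> {-1,1}. F ((\<lambda>(w,s). w(Suc N := w N + s)) p))"
    unfolding walks_Suc by (rule sum.reindex[OF walks_inj, unfolded comp_def])
  also have "\<dots> = (\<Sum>w\<in>walks N. \<Sum>s\<in>{-1,1::int}. F (w(Suc N := w N + s)))"
    by (subst sum.cartesian_product) (simp add: split_def)
  also have "\<dots> = (\<Sum>w\<in>walks N. F (w(Suc N := w N - 1)) + F (w(Suc N := w N + 1)))"
    by simp
  also have "\<dots> = (\<Sum>w\<in>walks N. F (w(Suc N := w N + 1)) + F (w(Suc N := w N - 1)))"
    by (rule sum.cong[OF refl]) (simp add: add.commute)
  finally show ?thesis .
qed

lemma card_walks: "card (walks N) = 2^N"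
proof (induction N)
  case 0 then show ?case by (simp add: walks_0)
next
  case (Suc N)
  have "card (walks (Suc N)) = (\<Sum>w\<in>walks (Suc N). 1)" by simp
  also have "\<dots> = (\<Sum>w\<in>walks N. 2)" by (subst sum_walks_Suc) simp
  finally show ?case using Suc by simp
qed

lemma walks_bound: "w \<in> walks N \<Longrightarrow> n \<le> N \<Longrightarrow> \<bar>w n\<bar> \<le> int n"
proof (induction n)
  case 0 then show ?case by (simp add: walks_def)
next
  case (Suc n)
  have "Suc n \<in> {1..N}" using Suc by auto
  then have "\<bar>w (Suc n) - w n\<bar> = 1" using Suc.prems(1) unfolding walks_def by fastforce
  then show ?case using Suc by linarith
qed



definition cat :: "nat \<Rightarrow> nat \<Rightarrow> (nat \<Rightarrow> int) \<Rightarrow> (nat \<Rightarrow> int) \<Rightarrow> nat \<Rightarrow> int" where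
  "cat t m u v n = (if n \<le> t then u n else if n \<le> t + m then u t + v (n - t) else 0)"

lemma cat_0: "u \<in> walks t \<Longrightarrow> cat t 0 u v = u"
  unfolding cat_def walks_def by (auto intro!: ext)

lemma cat_ext: assumes "v \<in> walks m"
  shows "(cat t m u v)(Suc (t+m) := cat t m u v (t+m) + s) = cat t (Suc m) u (v(Suc m := v m + s))"
proof
  fix n
  have v0: "v 0 = 0" using assms unfolding walks_def by auto
  show "((cat t m u v)(Suc (t+m) := cat t m u v (t+m) + s)) n = cat t (Suc m) u (v(Suc m := v m + s)) n"
    using v0 unfolding cat_def by (auto simp: Suc_diff_le)
qed

lemma sum_walks_cat:
  "(\<Sum>w\<in>walks (t+m). F w) = (\<Sum>u\<in>walks t. \<Sum>v\<in>walks m. F (cat t m u v))"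
proof (induction m arbitrary: F)
  case 0
  then show ?case by (simp add: walks_0 cat_0)
next
  case (Suc m)
  have "(\<Sum>w\<in>walks (t + Suc m). F w) = (\<Sum>w\<in>walks (Suc (t + m)). F w)" by simp
  also have "\<dots> = (\<Sum>w\<in>walks (t+m). F (w(Suc (t+m) := w (t+m) + 1)) + F (w(Suc (t+m) := w (t+m) - 1)))"
    by (subst sum_walks_Suc) simp
  also have "\<dots> = (\<Sum>u\<in>walks t. \<Sum>v\<in>walks m. F ((cat t m u v)(Suc (t+m) := cat t m u v (t+m) + 1)) + F ((cat t m u v)(Suc (t+m) := cat t m u v (t+m) - 1)))"
    by (rule Suc.IH)
  also have "\<dots> = (\<Sum>u\<in>walks t. \<Sum>v\<in>walks m. F (cat t (Suc m) u (v(Suc m := v m + 1))) + F (cat t (Suc m) u (v(Suc m := v m - 1))))"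
    by (intro sum.cong refl) (use cat_ext[of _ m t _ 1] cat_ext[of _ m t _ "-1"] in simp)
  also have "\<dots> = (\<Sum>u\<in>walks t. \<Sum>v\<in>walks (Suc m). F (cat t (Suc m) u v))"
    by (subst sum_walks_Suc) simp
  finally show ?case .
qed

definition avg :: "nat \<Rightarrow> ((nat \<Rightarrow> int) \<Rightarrow> real) \<Rightarrow> real" where
  "avg N F = (\<Sum>w\<in>walks N. F w) / 2^N"

lemma avg_cat: "avg (t+m) F = avg t (\<lambda>u. avg m (\<lambda>v. F (cat t m u v)))"
  unfolding avg_def sum_walks_cat by (simp add: sum_divide_distrib power_add mult.commute)

lemma avg_Suc: "avg (Suc N) F = avg N (\<lambda>w. (F (w(Suc N := w N + 1)) + F (w(Suc N := w N - 1))) / 2)"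
  unfolding avg_def sum_walks_Suc by (simp add: sum_divide_distrib)

lemma avg_const: "avg N (\<lambda>_. a) = a"
  unfolding avg_def using card_walks[of N] by simp

lemma avg_add: "avg N (\<lambda>w. f w + g w) = avg N f + avg N g"
  unfolding avg_def by (simp add: sum.distrib add_divide_distrib)

lemma avg_diff: "avg N (\<lambda>w. f w - g w) = avg N f - avg N g"
  unfolding avg_def by (simp add: sum_subtractf diff_divide_distrib)

lemma avg_cmult: "avg N (\<lambda>w. a * f w) = a * avg N f"
  unfolding avg_def by (simp add: sum_distrib_left)

lemma avg_multc: "avg N (\<lambda>w. f w * a) = avg N f * a"
  unfolding avg_def by (simp add: sum_distrib_right)

lemma avg_sum: "finite T \<Longrightarrow> avg N (\<lambda>w. \<Sum>t\<in>T. f t w) = (\<Sum>t\<in>T. avg N (f t))"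
  unfolding avg_def by (simp add: sum_divide_distrib[symmetric] sum.swap[of _ T])

lemma avg_mono: "(\<And>w. w \<in> walks N \<Longrightarrow> f w \<le> g w) \<Longrightarrow> avg N f \<le> avg N g"
  unfolding avg_def by (intro divide_right_mono sum_mono) auto

lemma avg_nonneg: "(\<And>w. w \<in> walks N \<Longrightarrow> 0 \<le> f w) \<Longrightarrow> 0 \<le> avg N f"
  using avg_mono[of N "\<lambda>_. 0" f] by (simp add: avg_const)

lemma avg_cong: "(\<And>w. w \<in> walks N \<Longrightarrow> f w = g w) \<Longrightarrow> avg N f = avg N g"
  unfolding avg_def by (simp cong: sum.cong)

lemma integral_PN: "(\<integral>w. F w \<partial>measure_pmf (PN N)) = avg N F"
proof -
  have "walks N \<noteq> {}" using card_walks[of N] by auto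
  then show ?thesis unfolding PN_def avg_def
    by (simp add: integral_pmf_of_set finite_walks card_walks)
qed



lemma prod_expand:
  fixes x :: "nat \<Rightarrow> real"
  shows "(\<Prod>n\<in>{1..N}. 1 + x n) = 1 + (\<Sum>t\<in>{1..N}. x t * (\<Prod>n\<in>{Suc t..N}. 1 + x n))"
proof (induction N)
  case 0 then show ?case by simp
next
  case (Suc N)
  have "(\<Sum>t\<in>{1..N}. x t * (\<Prod>n\<in>{Suc t..Suc N}. 1 + x n)) = (\<Sum>t\<in>{1..N}. (1 + x (Suc N)) * (x t * (\<Prod>n\<in>{Suc t..N}. 1 + x n)))"
    by (intro sum.cong refl) (simp add: prod.nat_ivl_Suc')
  also have "\<dots> = (1 + x (Suc N)) * (\<Sum>t\<in>{1..N}. x t * (\<Prod>n\<in>{Suc t..N}. 1 + x n))"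
    by (simp add: sum_distrib_left)
  finally have e: "(\<Sum>t\<in>{1..N}. x t * (\<Prod>n\<in>{Suc t..Suc N}. 1 + x n)) = (1 + x (Suc N)) * (\<Sum>t\<in>{1..N}. x t * (\<Prod>n\<in>{Suc t..N}. 1 + x n))" .
  have "(\<Prod>n\<in>{1..Suc N}. 1 + x n) = (1 + x (Suc N)) * (\<Prod>n\<in>{1..N}. 1 + x n)"
    by (simp add: prod.nat_ivl_Suc')
  also have "\<dots> = 1 + (x (Suc N) + (\<Sum>t\<in>{1..N}. x t * (\<Prod>n\<in>{Suc t..Suc N}. 1 + x n)))"
    unfolding Suc e by (simp add: algebra_simps)
  also have "\<dots> = 1 + (\<Sum>t\<in>{1..Suc N}. x t * (\<Prod>n\<in>{Suc t..Suc N}. 1 + x n))"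
    by (simp add: sum.nat_ivl_Suc')
  finally show ?case .
qed

definition dlt :: "(nat \<Rightarrow> int) \<Rightarrow> (nat \<Rightarrow> int) \<Rightarrow> nat \<Rightarrow> real" where
  "dlt w b n = (if w n = b n then 1 else 0)"

definition G :: "real \<Rightarrow> nat \<Rightarrow> (nat \<Rightarrow> int) \<Rightarrow> real" where
  "G e m b = avg m (\<lambda>v. \<Prod>j\<in>{1..m}. 1 + e * dlt v b j)"

definition pt :: "nat \<Rightarrow> int \<Rightarrow> real" where
  "pt t x = avg t (\<lambda>u. if u t = x then 1 else 0)"

lemma pt_nonneg: "0 \<le> pt t x"
  unfolding pt_def by (rule avg_nonneg) auto

lemma G_step:
  assumes "t \<in> {1..N}"
  shows "avg N (\<lambda>w. e * dlt w b t * (\<Prod>n\<in>{Suc t..N}. 1 + e * dlt w b n))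
         = e * pt t (b t) * G e (N - t) (\<lambda>j. b (t+j) - b t)"
proof -
  obtain m where N: "N = t + m" using assms by (metis atLeastAtMost_iff le_add_diff_inverse)
  let ?b = "\<lambda>j. b (t+j) - b t"
  have inner: "avg m (\<lambda>v. e * dlt (cat t m u v) b t * (\<Prod>n\<in>{Suc t..t+m}. 1 + e * dlt (cat t m u v) b n))
     = e * (if u t = b t then 1 else 0) * G e m ?b" for u
  proof (cases "u t = b t")
    case False
    then have "dlt (cat t m u v) b t = 0" for v unfolding dlt_def cat_def by simp
    then show ?thesis using False by (simp add: avg_const)
  next
    case True
    have "(\<Prod>n\<in>{Suc t..t+m}. 1 + e * dlt (cat t m u v) b n) = (\<Prod>j\<in>{1..m}. 1 + e * dlt v ?b j)" for v
    proof -
      have "(\<Prod>n\<in>{Suc t..t+m}. 1 + e * dlt (cat t m u v) b n) = (\<Prod>n\<in>{1+t..m+t}. 1 + e * dlt (cat t m u v) b n)"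
        by (simp add: add.commute)
      also have "\<dots> = (\<Prod>j\<in>{1..m}. 1 + e * dlt (cat t m u v) b (j + t))"
        by (rule prod.shift_bounds_cl_nat_ivl)
      also have "\<dots> = (\<Prod>j\<in>{1..m}. 1 + e * dlt v ?b j)"
        by (intro prod.cong refl) (use True in \<open>auto simp: dlt_def cat_def add.commute\<close>)
      finally show ?thesis .
    qed
    moreover have "dlt (cat t m u v) b t = 1" for v unfolding dlt_def cat_def using True by simp
    ultimately show ?thesis using True unfolding G_def by (simp add: avg_cmult)
  qed
  have "avg N (\<lambda>w. e * dlt w b t * (\<Prod>n\<in>{Suc t..N}. 1 + e * dlt w b n))
     = avg t (\<lambda>u. e * (if u t = b t then 1 else 0) * G e m ?b)"
    unfolding N avg_cat inner ..
  also have "\<dots> = e * pt t (b t) * G e m ?b"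
    unfolding pt_def by (simp add: avg_cmult avg_multc)
  finally show ?thesis using N by simp
qed

lemma geom_id: "1 + (x::real) * (\<Sum>k<m. x^k) = (\<Sum>k\<le>m. x^k)"
  by (induction m) (auto simp: algebra_simps)

lemma G_bound:
  assumes e: "e \<ge> 0" and qnn: "\<And>t. q t \<ge> (0::real)" and pq: "\<And>t x. t \<ge> 1 \<Longrightarrow> pt t x \<le> q t"
  shows "G e m b \<le> (\<Sum>k\<le>m. (e * (\<Sum>t\<in>{1..m}. q t))^k)"
proof (induction m arbitrary: b rule: less_induct)
  case (less m)
  define Q where "Q m = (\<Sum>t\<in>{1..m}. q t)" for m
  define B where "B = (\<Sum>k<m. (e * Q m)^k)"
  have Bnn: "0 \<le> B" unfolding B_def Q_def using e qnn by (intro sum_nonneg zero_le_power mult_nonneg_nonneg) auto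
  have "G e m b = avg m (\<lambda>v. 1 + (\<Sum>t\<in>{1..m}. e * dlt v b t * (\<Prod>n\<in>{Suc t..m}. 1 + e * dlt v b n)))"
    unfolding G_def by (subst prod_expand) (simp add: mult.assoc)
  also have "\<dots> = 1 + (\<Sum>t\<in>{1..m}. e * pt t (b t) * G e (m - t) (\<lambda>j. b (t+j) - b t))"
    by (simp add: avg_add avg_const avg_sum G_step)
  also have "\<dots> \<le> 1 + (\<Sum>t\<in>{1..m}. e * q t * B)"
  proof (intro add_left_mono sum_mono)
    fix t assume t: "t \<in> {1..m}"
    have "G e (m - t) (\<lambda>j. b (t+j) - b t) \<le> (\<Sum>k\<le>m-t. (e * Q (m-t))^k)"
      using less.IH[of "m - t"] t unfolding Q_def by auto
    also have "\<dots> \<le> (\<Sum>k\<le>m-t. (e * Q m)^k)"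
    proof (intro sum_mono power_mono mult_left_mono e)
      show "Q (m - t) \<le> Q m" unfolding Q_def using qnn by (intro sum_mono2) auto
      show "0 \<le> e * Q (m - t)" unfolding Q_def using e qnn by (intro sum_nonneg mult_nonneg_nonneg) auto
    qed
    also have "\<dots> \<le> B" unfolding B_def
      using t e qnn by (intro sum_mono2) (auto simp: Q_def intro!: zero_le_power sum_nonneg mult_nonneg_nonneg)
    finally have GB: "G e (m - t) (\<lambda>j. b (t+j) - b t) \<le> B" .
    have "e * pt t (b t) * G e (m - t) (\<lambda>j. b (t+j) - b t) \<le> e * pt t (b t) * B"
      using GB e pt_nonneg by (intro mult_left_mono) auto
    also have "\<dots> \<le> e * q t * B" using pq[of t "b t"] t e Bnn
      by (intro mult_right_mono mult_left_mono) auto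
    finally show "e * pt t (b t) * G e (m - t) (\<lambda>j. b (t+j) - b t) \<le> e * q t * B" .
  qed
  also have "\<dots> = 1 + (e * Q m) * B" unfolding Q_def by (simp add: sum_distrib_right sum_distrib_left mult_ac)
  also have "\<dots> = (\<Sum>k\<le>m. (e * Q m)^k)" unfolding B_def by (rule geom_id)
  finally show ?case unfolding Q_def .
qed



declare binomial_Suc_Suc[simp del]

lemma central_rel: "(Suc (2 * s) choose s) * 2 = (Suc (Suc (2 * s)) choose Suc s)"
       "((2 * s) choose s) * (2*(2 * s+1)) = (Suc (Suc (2 * s)) choose Suc s) * Suc s"
proof -
  define X where "X = ((2 * s) choose s)"
  define Y where "Y = (Suc (2 * s) choose s)"
  define Z where "Z = (Suc (Suc (2 * s)) choose Suc s)"
  have a: "Suc (Suc (2 * s)) * Y = Z * Suc s"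
    unfolding Y_def Z_def by (rule Suc_times_binomial_eq)
  have c: "(Suc (2 * s) choose Suc s) = Y"
    unfolding Y_def using binomial_symmetric[of "Suc s" "Suc (2 * s)"] by simp
  have b: "Suc (2 * s) * X = Y * Suc s"
    unfolding X_def using Suc_times_binomial_eq[of "2 * s" s] c by simp
  have h: "Suc s * (Y * 2) = Suc s * Z" using a by (simp add: algebra_simps)
  have ns: "Suc s \<noteq> 0" by simp
  show 1: "Y * 2 = Z" using h mult_left_cancel[OF ns, of "Y*2" Z] by blast
  have "X * (2*(2 * s+1)) = 2 * (Suc (2 * s) * X)" by (simp add: algebra_simps)
  also have "\<dots> = 2 * (Y * Suc s)" by (simp only: b)
  also have "\<dots> = (Y * 2) * Suc s" by (simp add: algebra_simps)
  also have "\<dots> = Z * Suc s" by (simp only: 1)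
  finally show "X * (2*(2 * s+1)) = Z * Suc s" .
qed

lemma central_even: "real ((2 * s) choose s)^2 * (2 * s+1) \<le> 16^s"
proof (induction s)
  case 0 then show ?case by simp
next
  case (Suc s)
  define C where "C = real ((2 * s) choose s)"
  define D where "D = real ((2 * Suc s) choose Suc s)"
  have ss: "Suc (Suc (2 * s)) = 2 * Suc s" by simp
  define r where "r = real s"
  have rel: "C * (2*(2 * r+1)) = D * (r+1)"
    unfolding C_def D_def r_def using arg_cong[where f=real, OF central_rel(2)[of s, unfolded ss]] by (simp add: algebra_simps)
  have IH: "C^2 * (2 * r+1) \<le> 16^s" using Suc unfolding C_def r_def by (simp add: algebra_simps)
  have r0: "r \<ge> 0" unfolding r_def by simp
  have "D^2 * (r+1)^2 * (2 * r+3) = (D * (r+1))^2 * (2 * r+3)" by (simp add: power_mult_distrib)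
  also have "\<dots> = (C * (2*(2 * r+1)))^2 * (2 * r+3)" using rel by simp
  also have "\<dots> = (4 * (2 * r+1) * (2 * r+3)) * (C^2 * (2 * r+1))" by (simp add: power2_eq_square algebra_simps)
  also have "\<dots> \<le> (4 * (2 * r+1) * (2 * r+3)) * 16^s"
    using IH r0 by (intro mult_left_mono) auto
  also have "\<dots> \<le> (16 * (r+1)^2) * 16^s"
    using r0 by (intro mult_right_mono) (auto simp: power2_eq_square algebra_simps)
  finally have "(r+1)^2 * (D^2 * (2 * r+3)) \<le> (r+1)^2 * 16^(Suc s)" by (simp add: mult_ac)
  then have "D^2 * (2 * r+3) \<le> 16^(Suc s)"
    by (rule mult_left_le_imp_le) (use r0 in auto)
  then show ?case unfolding D_def r_def by (simp add: algebra_simps)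
qed

lemma central_bound: "t \<ge> 1 \<Longrightarrow> real (t choose (t div 2))^2 * t \<le> 4^t"
proof -
  assume t: "t \<ge> 1"
  have "t = 2 * (t div 2) \<or> t = 2 * (t div 2)+1" by presburger
  then obtain s where "t = 2 * s \<or> t = 2 * s+1" by blast
  then show ?thesis
  proof
    assume ts: "t = 2 * s"
    have "real (t choose (t div 2))^2 * t = real ((2 * s) choose s)^2 * (2 * s)"
      using ts by simp
    also have "\<dots> \<le> real ((2 * s) choose s)^2 * (2 * s+1)"
      by (intro mult_left_mono) auto
    also have "\<dots> \<le> 16^s" by (rule central_even)
    also have "\<dots> = 4^t" using ts by (simp add: power_mult)
    finally show ?thesis .
  next
    assume ts: "t = 2 * s+1"
    have d: "t div 2 = s" using ts by simp
    have ss: "s + 1 = Suc s" "2 * Suc s = Suc (Suc (2 * s))" "2 * s+1 = Suc (2 * s)" by simp_all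
    have n: "((2 * s+1) choose s) * 2 = ((2*(s+1)) choose (s+1))"
      unfolding ss using central_rel(1)[of s] .
    have r: "real ((2 * s+1) choose s) * 2 = real ((2*(s+1)) choose (s+1))"
      using arg_cong[where f=real, OF n] by simp
    have "4 * (real (t choose (t div 2))^2 * t) = (real ((2 * s+1) choose s) * 2)^2 * (2 * s+1)"
      using ts d by (simp add: power2_eq_square)
    also have "\<dots> \<le> real ((2*(s+1)) choose (s+1))^2 * (2*(s+1)+1)"
      unfolding r by (intro mult_left_mono) auto
    also have "\<dots> \<le> 16^(s+1)" by (rule central_even)
    also have "\<dots> = 4 * 4^t" using ts by (simp add: power_mult power_add)
    finally show ?thesis by simp
  qed
qed

lemma pt_0: "pt 0 x = (if x = 0 then 1 else 0)"
  unfolding pt_def avg_def by (simp add: walks_0)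

lemma pt_Suc: "pt (Suc t) x = (pt t (x - 1) + pt t (x + 1)) / 2"
  unfolding pt_def avg_Suc
  by (simp add: avg_add[symmetric] add_divide_distrib[symmetric] avg_multc[symmetric] del: avg_add)
     (rule avg_cong, auto)

definition Bc :: "nat \<Rightarrow> int \<Rightarrow> real" where
  "Bc t x = (if even (x + int t) \<and> - int t \<le> x then real (t choose nat ((x + int t) div 2)) else 0)"

lemma Bc_rec: "Bc (Suc t) x = Bc t (x - 1) + Bc t (x + 1)"
proof (cases "even (x + int t + 1)")
  case False
  then show ?thesis unfolding Bc_def by auto
next
  case True
  show ?thesis
  proof (cases "x < - int t - 1")
    case True then show ?thesis unfolding Bc_def by auto
  next
    case False
    show ?thesis
    proof (cases "x = - int t - 1")
      case True
      then show ?thesis unfolding Bc_def by auto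
    next
      case False
      with \<open>\<not> x < - int t - 1\<close> have xge: "x \<ge> - int t" by auto
      obtain j where j: "x + int t + 1 = 2 * int (Suc j)"
      proof -
        from \<open>even (x + int t + 1)\<close> obtain k where k: "x + int t + 1 = 2 * k" unfolding dvd_def by blast
        have "k \<ge> 1" using k xge by linarith
        then show ?thesis using that[of "nat (k - 1)"] k by auto
      qed
      have e1: "nat ((x + int (Suc t)) div 2) = Suc j" using j by simp
      have e2: "nat ((x - 1 + int t) div 2) = j" using j by simp
      have e3: "nat ((x + 1 + int t) div 2) = Suc j" using j by simp
      have p1: "even (x - 1 + int t)" "even (x + 1 + int t)" "even (x + int (Suc t))" using j by presburger+
      have j1: "int (Suc j) \<ge> 1" by simp
      have c1a: "-int t \<le> x - 1" using j by presburger
      have c1b: "-int t \<le> x + 1" using j by presburger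
      have c1c: "- int (Suc t) \<le> x" using j j1 by simp
      note c1 = c1a c1b c1c
      show ?thesis by (simp only: Bc_def e1 e2 e3 p1 c1 simp_thms if_True binomial_Suc_Suc of_nat_add)
    qed
  qed
qed

lemma pt_closed: "pt t x = Bc t x / 2^t"
proof (induction t arbitrary: x)
  case 0
  have "\<And>x::int. x \<noteq> 0 \<Longrightarrow> even x \<Longrightarrow> 0 \<le> x \<Longrightarrow> 0 < x div 2" by presburger
  then show ?case by (auto simp: pt_0 Bc_def)
next
  case (Suc t)
  then show ?case by (simp add: pt_Suc Bc_rec add_divide_distrib)
qed

lemma pt_bound: "t \<ge> 1 \<Longrightarrow> pt t x \<le> 1 / sqrt t"
proof -
  assume t: "t \<ge> 1"
  have "Bc t x \<le> real (t choose (t div 2))"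
    unfolding Bc_def using binomial_maximum by auto
  then have le: "pt t x \<le> real (t choose (t div 2)) / 2^t"
    unfolding pt_closed by (intro divide_right_mono) auto
  have f: "((2::real)^t)^2 = 4^t"
  proof -
    have "(2*2::real)^t = 2^t*2^t" by (rule power_mult_distrib)
    then show ?thesis by (simp add: power2_eq_square)
  qed
  define C where "C = real (t choose (t div 2))"
  have cb: "C^2 * t \<le> 4^t" unfolding C_def by (rule central_bound[OF t])
  have tp: "0 < real t" using t by simp
  have "C^2 \<le> 4^t / t" using cb tp by (simp add: pos_le_divide_eq)
  then have "C^2 / 4^t \<le> 1 / t" by (simp add: pos_divide_le_eq)
  then have "(real (t choose (t div 2)) / 2^t)^2 \<le> 1 / t" unfolding C_def by (simp add: power_divide f)
  then have "real (t choose (t div 2)) / 2^t \<le> sqrt (1 / t)"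
    by (simp add: real_le_rsqrt)
  with le show ?thesis by (simp add: real_sqrt_divide)
qed



abbreviation mu :: "real measure" where "mu \<equiv> measure_pmf (pmf_of_set {-1, 1::real})"

lemma Q_prod:
  fixes f :: "nat \<times> int \<Rightarrow> real \<Rightarrow> real"
  assumes J: "finite J"
  shows "integrable Qenv (\<lambda>h. \<Prod>j\<in>J. f j (h j))"
    and "(\<integral>h. (\<Prod>j\<in>J. f j (h j)) \<partial>Qenv) = (\<Prod>j\<in>J. \<integral>y. f j y \<partial>mu)"
proof -
  interpret P: product_prob_space "\<lambda>_::nat \<times> int. mu" UNIV
    by unfold_locales (simp add: prob_space_measure_pmf)
  let ?g = "\<lambda>x::nat \<times> int \<Rightarrow> real. \<Prod>j\<in>J. f j (x j)"
  have D: "distr Qenv (PiM J (\<lambda>_. mu)) (\<lambda>x. restrict x J) = PiM J (\<lambda>_. mu)"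
    unfolding Qenv_def by (rule P.distr_PiM_restrict_finite[OF J]) simp
  have mr: "(\<lambda>x. restrict x J) \<in> measurable Qenv (PiM J (\<lambda>_. mu))"
    unfolding Qenv_def by (rule measurable_restrict_subset) simp
  have mg: "?g \<in> borel_measurable (PiM J (\<lambda>_. mu))"
    by (intro borel_measurable_prod measurable_compose[OF measurable_component_singleton]) auto
  have eq: "?g (restrict h J) = (\<Prod>j\<in>J. f j (h j))" for h
    by (intro prod.cong refl) simp
  have fin: "integrable mu (f j)" for j
    by (rule integrable_measure_pmf_finite) simp
  have intJ: "integrable (PiM J (\<lambda>_. mu)) ?g"
    by (rule P.product_integrable_prod[OF J fin])
  have i2: "integrable (distr Qenv (PiM J (\<lambda>_. mu)) (\<lambda>x. restrict x J)) ?g"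
    by (subst D) (rule intJ)
  have i3: "integrable Qenv (\<lambda>h. ?g (restrict h J))"
    using integrable_distr_eq[OF mr mg] i2 by blast
  show "integrable Qenv (\<lambda>h. \<Prod>j\<in>J. f j (h j))"
    using i3 unfolding eq .
  have "(\<integral>h. (\<Prod>j\<in>J. f j (h j)) \<partial>Qenv) = (\<integral>h. ?g (restrict h J) \<partial>Qenv)"
    unfolding eq ..
  also have "\<dots> = (\<integral>x. ?g x \<partial>distr Qenv (PiM J (\<lambda>_. mu)) (\<lambda>x. restrict x J))"
    by (rule integral_distr[OF mr mg, symmetric])
  also have "\<dots> = (\<Prod>j\<in>J. \<integral>y. f j y \<partial>mu)"
    unfolding D by (rule P.product_integral_prod[OF J fin])
  finally show "(\<integral>h. (\<Prod>j\<in>J. f j (h j)) \<partial>Qenv) = (\<Prod>j\<in>J. \<integral>y. f j y \<partial>mu)" .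
qed

lemma int_mu: "(\<integral>y. (1 + c * y)^k \<partial>mu) = ((1 + c)^k + (1 - c)^k) / 2"
  by (simp add: integral_pmf_of_set)

lemma pow_if: "(g::real) ^ (if P then e else 0) = (if P then g ^ e else 1)"
  by simp

lemma prod_pow_delta:
  fixes g :: "int \<Rightarrow> real"
  assumes "finite X" "a \<in> X"
  shows "(\<Prod>x\<in>X. g x ^ (if a = x then e else 0)) = g a ^ e"
  using assms by (simp add: pow_if)

lemma Q_AA:
  fixes a b :: "nat \<Rightarrow> int" and ea eb :: nat and c :: real
  assumes ab: "\<And>n. n \<in> {1..N} \<Longrightarrow> \<bar>a n\<bar> \<le> int N \<and> \<bar>b n\<bar> \<le> int N"
    and e: "ea \<le> 1" "eb \<le> 1"
  defines "F \<equiv> \<lambda>h. \<Prod>n\<in>{1..N}. (1 + c * h (n, a n))^ea * (1 + c * h (n, b n))^eb"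
  shows "integrable Qenv F"
    and "(\<integral>h. F h \<partial>Qenv) = (\<Prod>n\<in>{1..N}. if ea = 1 \<and> eb = 1 \<and> a n = b n then 1 + c^2 else 1)"
proof -
  define X where "X = {- int N..int N}"
  define J where "J = {1..N} \<times> X"
  define f where "f = (\<lambda>(n, x) (y::real). (1 + c * y) ^ ((if a n = x then ea else 0) + (if b n = x then eb else 0)))"
  have finJ: "finite J" unfolding J_def X_def by simp
  have aX: "a n \<in> X" "b n \<in> X" if "n \<in> {1..N}" for n
    using ab[OF that] unfolding X_def by auto
  have FJ: "F h = (\<Prod>j\<in>J. f j (h j))" for h
  proof -
    have "(\<Prod>j\<in>J. f j (h j)) = (\<Prod>n\<in>{1..N}. \<Prod>x\<in>X. f (n, x) (h (n, x)))"
      unfolding J_def by (subst prod.cartesian_product) (simp add: split_def)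
    also have "\<dots> = (\<Prod>n\<in>{1..N}. (1 + c * h (n, a n))^ea * (1 + c * h (n, b n))^eb)"
    proof (intro prod.cong refl)
      fix n assume n: "n \<in> {1..N}"
      have "(\<Prod>x\<in>X. f (n, x) (h (n, x))) = (\<Prod>x\<in>X. (1 + c * h (n, x)) ^ (if a n = x then ea else 0) * (1 + c * h (n, x)) ^ (if b n = x then eb else 0))"
        unfolding f_def by (simp add: power_add)
      also have "\<dots> = (\<Prod>x\<in>X. (1 + c * h (n, x)) ^ (if a n = x then ea else 0)) * (\<Prod>x\<in>X. (1 + c * h (n, x)) ^ (if b n = x then eb else 0))"
        by (rule prod.distrib)
      also have "\<dots> = (1 + c * h (n, a n))^ea * (1 + c * h (n, b n))^eb"
        using aX[OF n] unfolding X_def by (simp add: prod_pow_delta)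
      finally show "(\<Prod>x\<in>X. f (n, x) (h (n, x))) = (1 + c * h (n, a n))^ea * (1 + c * h (n, b n))^eb" .
    qed
    finally show ?thesis unfolding F_def ..
  qed
  show "integrable Qenv F" unfolding FJ by (rule Q_prod(1)[OF finJ])
  have "(\<integral>h. F h \<partial>Qenv) = (\<Prod>j\<in>J. \<integral>y. f j y \<partial>mu)"
    unfolding FJ by (rule Q_prod(2)[OF finJ])
  also have "\<dots> = (\<Prod>n\<in>{1..N}. \<Prod>x\<in>X. \<integral>y. f (n, x) y \<partial>mu)"
    unfolding J_def by (subst prod.cartesian_product) (simp add: split_def)
  also have "\<dots> = (\<Prod>n\<in>{1..N}. if ea = 1 \<and> eb = 1 \<and> a n = b n then 1 + c^2 else 1)"
  proof (intro prod.cong refl)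
    fix n assume n: "n \<in> {1..N}"
    have v: "(\<integral>y. f (n, x) y \<partial>mu) = (if a n = x then (if ea = 1 \<and> eb = 1 \<and> a n = b n then 1 + c^2 else 1) else 1)" for x
    proof -
      define k where "k = (if a n = x then ea else 0) + (if b n = x then eb else 0)"
      have "(\<integral>y. f (n, x) y \<partial>mu) = ((1+c)^k + (1-c)^k)/2" unfolding f_def k_def prod.case by (rule int_mu)
      then show ?thesis using e by (auto simp: k_def power2_eq_square algebra_simps le_Suc_eq split: if_splits)
    qed
    show "(\<Prod>x\<in>X. \<integral>y. f (n, x) y \<partial>mu) = (if ea = 1 \<and> eb = 1 \<and> a n = b n then 1 + c^2 else 1)"
      unfolding v using aX[OF n] unfolding X_def by simp
  qed
  finally show "(\<integral>h. F h \<partial>Qenv) = (\<Prod>n\<in>{1..N}. if ea = 1 \<and> eb = 1 \<and> a n = b n then 1 + c^2 else 1)" .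
qed



lemma mom2: "avg N (\<lambda>w. real_of_int (w N)^2) = real N"
proof (induction N)
  case 0 then show ?case by (simp add: avg_def walks_0)
next
  case (Suc N)
  have "avg (Suc N) (\<lambda>w. real_of_int (w (Suc N))^2) = avg N (\<lambda>w. real_of_int (w N)^2 + 1)"
    unfolding avg_Suc by (rule avg_cong) (simp add: power2_eq_square algebra_simps)
  then show ?case using Suc by (simp add: avg_add avg_const)
qed

lemma mom4: "avg N (\<lambda>w. real_of_int (w N)^4) = 3 * real N^2 - 2 * real N"
proof (induction N)
  case 0 then show ?case by (simp add: avg_def walks_0)
next
  case (Suc N)
  have "avg (Suc N) (\<lambda>w. real_of_int (w (Suc N))^4) = avg N (\<lambda>w. real_of_int (w N)^4 + 6 * real_of_int (w N)^2 + 1)"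
    unfolding avg_Suc by (rule avg_cong) (simp add: power2_eq_square power4_eq_xxxx algebra_simps)
  also have "\<dots> = avg N (\<lambda>w. real_of_int (w N)^4) + 6 * avg N (\<lambda>w. real_of_int (w N)^2) + 1"
    by (simp only: avg_add avg_cmult avg_const)
  also have "\<dots> = 3 * real (Suc N)^2 - 2 * real (Suc N)"
    unfolding Suc mom2 by (simp add: power2_eq_square algebra_simps)
  finally show ?case .
qed

lemma sum_rsqrt: "(\<Sum>t\<in>{1..N}. 1 / sqrt (real t)) \<le> 2 * sqrt (real N)"
proof (induction N)
  case 0 then show ?case by simp
next
  case (Suc N)
  define u where "u = sqrt (real N)"
  define v where "v = sqrt (real (Suc N))"
  have u0: "u \<ge> 0" and v0: "v > 0" unfolding u_def v_def by auto
  have uu: "u^2 = real N" and vv: "v^2 = real N + 1" unfolding u_def v_def by auto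
  have "2 * u * v \<le> u^2 + v^2" by (simp add: sum_squares_bound)
  then have "2 * u * v + 1 \<le> 2 * v^2" using uu vv by simp
  then have "(2 * u + 1 / v) * v \<le> (2 * v) * v" using v0 by (simp add: algebra_simps power2_eq_square)
  then have key: "2 * u + 1 / v \<le> 2 * v" using v0 by (simp add: mult_le_cancel_right)
  have "(\<Sum>t\<in>{1..Suc N}. 1 / sqrt (real t)) = (\<Sum>t\<in>{1..N}. 1 / sqrt (real t)) + 1 / v"
    unfolding v_def by (simp add: sum.nat_ivl_Suc')
  also have "\<dots> \<le> 2 * u + 1 / v" using Suc unfolding u_def by simp
  also have "\<dots> \<le> 2 * v" by (rule key)
  finally show ?case unfolding v_def .
qed

lemma sum_atMost_split: "(\<Sum>k\<le>m. (x::real)^k) = 1 + (\<Sum>k\<in>{1..m}. x^k)"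
  by (induction m) (auto simp: sum.nat_ivl_Suc')

lemma G_minus1:
  assumes e: "e \<ge> 0" and N: "N \<ge> 1"
  shows "G e N b - 1 \<le> (\<Sum>k\<in>{1..N}. (2 * e * sqrt (real N))^k)"
proof -
  define q where "q t = 1 / sqrt (real t)" for t
  have qnn: "q t \<ge> 0" for t unfolding q_def by simp
  have pq: "t \<ge> 1 \<Longrightarrow> pt t x \<le> q t" for t x unfolding q_def by (rule pt_bound)
  have Q: "(\<Sum>t\<in>{1..N}. q t) \<le> 2 * sqrt (real N)" unfolding q_def by (rule sum_rsqrt)
  have Qn: "(\<Sum>t\<in>{1..N}. q t) \<ge> 0" using qnn by (simp add: sum_nonneg)
  have "G e N b \<le> (\<Sum>k\<le>N. (e * (\<Sum>t\<in>{1..N}. q t))^k)"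
    by (rule G_bound[OF e qnn pq])
  also have "\<dots> = 1 + (\<Sum>k\<in>{1..N}. (e * (\<Sum>t\<in>{1..N}. q t))^k)" by (rule sum_atMost_split)
  also have "\<dots> \<le> 1 + (\<Sum>k\<in>{1..N}. (2 * e * sqrt (real N))^k)"
    using e Q Qn by (intro add_left_mono sum_mono power_mono) (auto simp: mult_left_mono mult.commute mult.left_commute)
  finally show ?thesis by simp
qed



lemma main_bound:
  fixes c :: "nat \<Rightarrow> real"
  assumes N: "N \<ge> 1"
  shows "(\<integral>h. (K c N h - real N)^2 \<partial>Qenv) \<le> (real N)^2 * (\<Sum>n=1..N. (6 * (c N)^2 * sqrt (real N))^n)"
proof -
  define W where "W = walks N"
  define cc where "cc = c N"
  define A where "A w h = (\<Prod>n\<in>{1..N}. 1 + cc * h (n, w n))" for w :: "nat \<Rightarrow> int" and h :: "nat \<times> int \<Rightarrow> real"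
  define \<beta> where "\<beta> w = real_of_int (w N)^2 / 2^N" for w :: "nat \<Rightarrow> int"
  define P where "P w v = (\<Prod>n\<in>{1..N}. if w n = v n then 1 + cc^2 else (1::real))" for w v :: "nat \<Rightarrow> int"
  have finW: "finite W" unfolding W_def by (rule finite_walks)
  have cardW: "card W = 2^N" unfolding W_def by (rule card_walks)
  have bnd: "\<bar>w n\<bar> \<le> int N" if "w \<in> W" "n \<in> {1..N}" for w n
    using walks_bound[of w N n] that unfolding W_def by auto
  have KA: "K c N h - real N = (\<Sum>w\<in>W. \<beta> w * (A w h - 1))" for h
  proof -
    have "K c N h = avg N (\<lambda>w. A w h * real_of_int (w N)^2)"
      unfolding K_def integral_PN A_def cc_def ..
    also have "\<dots> = (\<Sum>w\<in>W. \<beta> w * A w h)"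
      unfolding avg_def \<beta>_def W_def by (simp add: sum_divide_distrib mult.commute)
    finally have k: "K c N h = (\<Sum>w\<in>W. \<beta> w * A w h)" .
    have n: "real N = (\<Sum>w\<in>W. \<beta> w)"
      using mom2[of N] unfolding avg_def \<beta>_def W_def by (simp add: sum_divide_distrib)
    show ?thesis unfolding k n by (simp add: sum_subtractf right_diff_distrib)
  qed
  have sq: "(K c N h - real N)^2 = (\<Sum>w\<in>W. \<Sum>v\<in>W. \<beta> w * \<beta> v * ((A w h - 1) * (A v h - 1)))" for h
    unfolding KA power2_eq_square sum_product by (intro sum.cong refl) (simp add: mult_ac)
  have DI: "integrable Qenv (\<lambda>h. (A w h - 1) * (A v h - 1)) \<and> (\<integral>h. (A w h - 1) * (A v h - 1) \<partial>Qenv) = P w v - 1"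
    if w: "w \<in> W" and v: "v \<in> W" for w v
  proof -
    have ab: "\<And>n. n \<in> {1..N} \<Longrightarrow> \<bar>w n\<bar> \<le> int N \<and> \<bar>v n\<bar> \<le> int N" using bnd w v by auto
    note i11 = Q_AA(1)[where a=w and b=v and ea=1 and eb=1 and c=cc and N=N, OF ab order.refl order.refl]
    note i10 = Q_AA(1)[where a=w and b=v and ea=1 and eb=0 and c=cc and N=N, OF ab order.refl zero_le_one]
    note i01 = Q_AA(1)[where a=w and b=v and ea=0 and eb=1 and c=cc and N=N, OF ab zero_le_one order.refl]
    note v11 = Q_AA(2)[where a=w and b=v and ea=1 and eb=1 and c=cc and N=N, OF ab order.refl order.refl]
    note v10 = Q_AA(2)[where a=w and b=v and ea=1 and eb=0 and c=cc and N=N, OF ab order.refl zero_le_one]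
    note v01 = Q_AA(2)[where a=w and b=v and ea=0 and eb=1 and c=cc and N=N, OF ab zero_le_one order.refl]
    have f11: "(\<lambda>h. \<Prod>n\<in>{1..N}. (1 + cc * h (n, w n))^1 * (1 + cc * h (n, v n))^1) = (\<lambda>h. A w h * A v h)"
      unfolding A_def by (simp add: prod.distrib)
    have f10: "(\<lambda>h. \<Prod>n\<in>{1..N}. (1 + cc * h (n, w n))^1 * (1 + cc * h (n, v n))^0) = A w"
      unfolding A_def by (simp add: fun_eq_iff)
    have f01: "(\<lambda>h. \<Prod>n\<in>{1..N}. (1 + cc * h (n, w n))^0 * (1 + cc * h (n, v n))^1) = A v"
      unfolding A_def by (simp add: fun_eq_iff)
    have I11: "integrable Qenv (\<lambda>h. A w h * A v h)" using i11 unfolding f11 by simp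
    have I10: "integrable Qenv (A w)" using i10 unfolding f10 by simp
    have I01: "integrable Qenv (A v)" using i01 unfolding f01 by simp
    have V11: "(\<integral>h. A w h * A v h \<partial>Qenv) = P w v" using v11 unfolding f11 P_def by simp
    have V10: "(\<integral>h. A w h \<partial>Qenv) = 1" using v10 unfolding f10 by simp
    have V01: "(\<integral>h. A v h \<partial>Qenv) = 1" using v01 unfolding f01 by simp
    interpret prob_space Qenv unfolding Qenv_def
      by (intro prob_space_PiM prob_space_measure_pmf)
    have e: "(\<lambda>h. (A w h - 1) * (A v h - 1)) = (\<lambda>h. A w h * A v h - A w h - A v h + 1)"
      by (simp add: fun_eq_iff algebra_simps)
    have I: "integrable Qenv (\<lambda>h. A w h * A v h - A w h - A v h + 1)"
      using I11 I10 I01 by auto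
    have "(\<integral>h. A w h * A v h - A w h - A v h + 1 \<partial>Qenv) = P w v - 1 - 1 + 1"
      using I11 I10 I01 V11 V10 V01 by (simp add: prob_space)
    then show ?thesis unfolding e using I by simp
  qed
  have intsq: "(\<integral>h. (K c N h - real N)^2 \<partial>Qenv) = (\<Sum>w\<in>W. \<Sum>v\<in>W. \<beta> w * \<beta> v * (P w v - 1))"
  proof -
    have "(\<integral>h. (K c N h - real N)^2 \<partial>Qenv) = (\<integral>h. (\<Sum>w\<in>W. \<Sum>v\<in>W. \<beta> w * \<beta> v * ((A w h - 1) * (A v h - 1))) \<partial>Qenv)"
      unfolding sq ..
    also have "\<dots> = (\<Sum>w\<in>W. \<integral>h. (\<Sum>v\<in>W. \<beta> w * \<beta> v * ((A w h - 1) * (A v h - 1))) \<partial>Qenv)"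
      by (rule Bochner_Integration.integral_sum[where f="\<lambda>w h. \<Sum>v\<in>W. \<beta> w * \<beta> v * ((A w h - 1) * (A v h - 1))"]) (use DI in auto)
    also have "\<dots> = (\<Sum>w\<in>W. \<Sum>v\<in>W. \<integral>h. \<beta> w * \<beta> v * ((A w h - 1) * (A v h - 1)) \<partial>Qenv)"
    proof (intro sum.cong refl)
      fix w assume "w \<in> W"
      show "(\<integral>h. (\<Sum>v\<in>W. \<beta> w * \<beta> v * ((A w h - 1) * (A v h - 1))) \<partial>Qenv) = (\<Sum>v\<in>W. \<integral>h. \<beta> w * \<beta> v * ((A w h - 1) * (A v h - 1)) \<partial>Qenv)"
        by (rule Bochner_Integration.integral_sum[where f="\<lambda>v h. \<beta> w * \<beta> v * ((A w h - 1) * (A v h - 1))"]) (use DI \<open>w \<in> W\<close> in auto)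
    qed
    also have "\<dots> = (\<Sum>w\<in>W. \<Sum>v\<in>W. \<beta> w * \<beta> v * (P w v - 1))"
      by (intro sum.cong refl) (use DI in simp)
    finally show ?thesis .
  qed
  have Pge: "P w v \<ge> 1" for w v unfolding P_def by (rule prod_ge_1) simp
  have Psym: "P w v = P v w" for w v unfolding P_def by (intro prod.cong refl) auto
  define T where "T = (\<Sum>w\<in>W. \<Sum>v\<in>W. \<beta> w^2 * (P w v - 1))"
  have step1: "(\<Sum>w\<in>W. \<Sum>v\<in>W. \<beta> w * \<beta> v * (P w v - 1)) \<le> (\<Sum>w\<in>W. \<Sum>v\<in>W. ((\<beta> w^2 + \<beta> v^2) / 2) * (P w v - 1))"
  proof (intro sum_mono mult_right_mono)
    fix w v
    have "0 \<le> (\<beta> w - \<beta> v)^2" by simp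
    then show "\<beta> w * \<beta> v \<le> (\<beta> w^2 + \<beta> v^2) / 2" by (simp add: power2_eq_square algebra_simps)
    show "0 \<le> P w v - 1" using Pge[of w v] by simp
  qed
  have T2: "(\<Sum>w\<in>W. \<Sum>v\<in>W. \<beta> v^2 * (P w v - 1)) = T"
  proof -
    have "(\<Sum>w\<in>W. \<Sum>v\<in>W. \<beta> v^2 * (P w v - 1)) = (\<Sum>v\<in>W. \<Sum>w\<in>W. \<beta> v^2 * (P w v - 1))"
      by (rule sum.swap)
    also have "\<dots> = (\<Sum>v\<in>W. \<Sum>w\<in>W. \<beta> v^2 * (P v w - 1))" using Psym by simp
    finally show ?thesis unfolding T_def .
  qed
  have step2: "(\<Sum>w\<in>W. \<Sum>v\<in>W. ((\<beta> w^2 + \<beta> v^2) / 2) * (P w v - 1)) = T"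
  proof -
    have "(\<Sum>w\<in>W. \<Sum>v\<in>W. ((\<beta> w^2 + \<beta> v^2) / 2) * (P w v - 1))
        = ((\<Sum>w\<in>W. \<Sum>v\<in>W. \<beta> w^2 * (P w v - 1)) + (\<Sum>w\<in>W. \<Sum>v\<in>W. \<beta> v^2 * (P w v - 1))) / 2"
      by (simp add: sum.distrib sum_divide_distrib add_divide_distrib distrib_right)
    then show ?thesis unfolding T2 T_def by simp
  qed
  define e where "e = cc^2"
  define S where "S = (\<Sum>k\<in>{1..N}. (2 * e * sqrt (real N))^k)"
  have e0: "e \<ge> 0" unfolding e_def by simp
  have S0: "S \<ge> 0" unfolding S_def using e0 by (intro sum_nonneg zero_le_power) auto
  have GP: "(\<Sum>v\<in>W. (P w v - 1)) = 2^N * (G e N w - 1)" for w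
  proof -
    have "(\<Sum>v\<in>W. P w v) = 2^N * G e N w"
      unfolding G_def avg_def W_def P_def e_def dlt_def by (simp add: eq_commute[of "w _"] if_distrib cong: if_cong)
    then show ?thesis using cardW by (simp add: sum_subtractf algebra_simps)
  qed
  have step3: "T = avg N (\<lambda>w. real_of_int (w N)^4 * (G e N w - 1))"
  proof -
    have "T = (\<Sum>w\<in>W. \<beta> w^2 * (2^N * (G e N w - 1)))"
      unfolding T_def by (simp add: sum_distrib_left[symmetric] GP)
    also have "\<dots> = (\<Sum>w\<in>W. real_of_int (w N)^4 * (G e N w - 1) / 2^N)"
      by (intro sum.cong refl) (simp add: \<beta>_def power_divide power2_eq_square power4_eq_xxxx field_simps)
    finally show ?thesis unfolding avg_def W_def by (simp add: sum_divide_distrib)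
  qed
  have step4: "avg N (\<lambda>w. real_of_int (w N)^4 * (G e N w - 1)) \<le> avg N (\<lambda>w. real_of_int (w N)^4 * S)"
  proof (rule avg_mono)
    fix w :: "nat \<Rightarrow> int"
    have "G e N w - 1 \<le> S" unfolding S_def by (rule G_minus1[OF e0 N])
    then show "real_of_int (w N)^4 * (G e N w - 1) \<le> real_of_int (w N)^4 * S"
      by (intro mult_left_mono) auto
  qed
  have step5: "avg N (\<lambda>w. real_of_int (w N)^4 * S) \<le> 3 * (real N)^2 * S"
    unfolding avg_multc mom4 using S0 by (intro mult_right_mono) auto
  have step6: "3 * (real N)^2 * S \<le> (real N)^2 * (\<Sum>n=1..N. (6 * (c N)^2 * sqrt (real N))^n)"
  proof -
    have "3 * S = (\<Sum>k\<in>{1..N}. 3 * (2 * e * sqrt (real N))^k)" unfolding S_def by (simp add: sum_distrib_left)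
    also have "\<dots> \<le> (\<Sum>k\<in>{1..N}. (6 * (c N)^2 * sqrt (real N))^k)"
    proof (intro sum_mono)
      fix k assume k: "k \<in> {1..N}"
      have y0: "0 \<le> 2 * e * sqrt (real N)" using e0 by simp
      have "3 \<le> (3::real)^k"
      proof -
        have "(3::real)^1 \<le> 3^k" using k by (intro power_increasing) auto
        then show ?thesis by simp
      qed
      then have "3 * (2 * e * sqrt (real N))^k \<le> 3^k * (2 * e * sqrt (real N))^k"
        using y0 by (intro mult_right_mono) auto
      also have "\<dots> = (3 * (2 * e * sqrt (real N)))^k"
        by (rule power_mult_distrib[symmetric])
      also have "\<dots> = (6 * (c N)^2 * sqrt (real N))^k"
      proof -
        have base: "3 * (2 * e * sqrt (real N)) = 6 * (c N)^2 * sqrt (real N)" by (simp add: e_def cc_def)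
        show ?thesis by (simp only: base)
      qed
      finally show "3 * (2 * e * sqrt (real N))^k \<le> (6 * (c N)^2 * sqrt (real N))^k" .
    qed
    finally have "3 * S \<le> (\<Sum>k\<in>{1..N}. (6 * (c N)^2 * sqrt (real N))^k)" .
    then have "(real N)^2 * (3 * S) \<le> (real N)^2 * (\<Sum>k\<in>{1..N}. (6 * (c N)^2 * sqrt (real N))^k)"
      by (rule mult_left_mono) simp
    moreover have "3 * (real N)^2 * S = (real N)^2 * (3 * S)" by simp
    ultimately show ?thesis by simp
  qed
  have "(\<integral>h. (K c N h - real N)^2 \<partial>Qenv) \<le> T" using intsq step1 step2 by simp
  also have "\<dots> \<le> 3 * (real N)^2 * S" using step3 step4 step5 by simp
  also have "\<dots> \<le> (real N)^2 * (\<Sum>n=1..N. (6 * (c N)^2 * sqrt (real N))^n)" by (rule step6)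
  finally show ?thesis .
qed

theorem lemma13:
  shows "\<exists>c1::real. \<forall>c::nat \<Rightarrow> real.
           (\<forall>N. c N > 0) \<longrightarrow> ((\<lambda>N. (c N)^2 * sqrt (real N)) \<longlonglongrightarrow> 0) \<longrightarrow>
           (\<forall>N\<ge>1. (\<integral>h. (K c N h - real N)^2 \<partial>Qenv)
                  \<le> (real N)^2 * (\<Sum>n=1..N. (c1 * (c N)^2 * sqrt (real N))^n))"
  apply (rule exI[where x=6])
  apply (intro allI impI)
  apply (rule main_bound)
  apply assumption
  done


end
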